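(* Let $n,m\ge 2$ and suppose $\gamma_{2t}(K_n\Box K_m)<2\min\{n,m\}$. Let $S$ be any total $2$-dominating set of $K_n\Box K_m$ with $|S|=\gamma_{2t}(K_n\Box K_m)$. Then: (1) for every $v\in V(K_n)$, $S\cap(\{v\}\times V(K_m))\neq\emptyset$, and for every $w\in V(K_m)$, $S\cap(V(K_n)\times\{w\})\neq\emptyset$; (2) there exists $v\in V(K_n)$ with $|S\cap(\{v\}\times V(K_m))|\ge 3$, and there exists $w\in V(K_m)$ with $|S\cap(V(K_n)\times\{w\})|\ge 3$.
   Context: For a graph $G=(V,E)$, a set $S\subseteq V$ is a total $2$-dominating set if every vertex of $V$ (including those in $S$) is adjacent to at least $2$ vertices of $S$; $\gamma_{2t}(G)$ is the minimum cardinality of such a set. $G\Box H$ denotes the Cartesian product: vertex set $V(G)\times V(H)$, with $(u_1,v_1)\sim(u_2,v_2)$ iff either $u_1=u_2$ and $v_1\sim v_2$, or $v_1=v_2$ and $u_1\sim u_2$. $K_n$ is the complete graph on $n$ vertices; $V(K_n)=\{v_1,\dots,v_n\}$, $V(K_m)=\{w_1,\dots,w_m\}$. *)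

theory Defs
  imports Main
begin

text \<open>A graph is given by a vertex set V and a (symmetric, irreflexive) adjacency relation adj.\<close>

definition total_k_dominating :: "nat \<Rightarrow> 'a set \<Rightarrow> ('a \<Rightarrow> 'a \<Rightarrow> bool) \<Rightarrow> 'a set \<Rightarrow> bool" where
  "total_k_dominating k V adj S \<longleftrightarrow>
     S \<subseteq> V \<and> (\<forall>x\<in>V. card {y\<in>S. adj x y} \<ge> k)"

definition gamma_2t :: "'a set \<Rightarrow> ('a \<Rightarrow> 'a \<Rightarrow> bool) \<Rightarrow> nat" where
  "gamma_2t V adj = (LEAST c. \<exists>S. finite S \<and> total_k_dominating 2 V adj S \<and> card S = c)"

definition Kn_verts :: "nat \<Rightarrow> nat set" where "Kn_verts n = {0..<n}"
definition Kn_adj :: "nat \<Rightarrow> nat \<Rightarrow> bool" where "Kn_adj x y \<longleftrightarrow> x \<noteq> y"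

definition cart_verts :: "'a set \<Rightarrow> 'b set \<Rightarrow> ('a \<times> 'b) set" where
  "cart_verts V W = V \<times> W"
definition cart_adj :: "('a \<Rightarrow> 'a \<Rightarrow> bool) \<Rightarrow> ('b \<Rightarrow> 'b \<Rightarrow> bool) \<Rightarrow> 'a \<times> 'b \<Rightarrow> 'a \<times> 'b \<Rightarrow> bool" where
  "cart_adj adjG adjH p q \<longleftrightarrow>
     (fst p = fst q \<and> adjH (snd p) (snd q)) \<or> (snd p = snd q \<and> adjG (fst p) (fst q))"

end

theory Submission
  imports Defs
begin

lemma card_cols:
  fixes n m :: nat
  assumes "S \<subseteq> {0..<n} \<times> {0..<m}" "finite S"
  shows "card S = (\<Sum>w<m. card (S \<inter> ({0..<n} \<times> {w})))"
proof -
  have "S = (\<Union>w\<in>{..<m}. S \<inter> ({0..<n} \<times> {w}))" using assms(1) by auto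
  moreover have "card (\<Union>w\<in>{..<m}. S \<inter> ({0..<n} \<times> {w})) = (\<Sum>w<m. card (S \<inter> ({0..<n} \<times> {w})))"
    by (rule card_UN_disjoint) (use assms(2) in \<open>auto simp: finite_lessThan\<close>)
  ultimately show ?thesis by simp
qed

lemma card_rows:
  fixes n m :: nat
  assumes "S \<subseteq> {0..<n} \<times> {0..<m}" "finite S"
  shows "card S = (\<Sum>v<n. card (S \<inter> ({v} \<times> {0..<m})))"
proof -
  have "S = (\<Union>v\<in>{..<n}. S \<inter> ({v} \<times> {0..<m}))" using assms(1) by auto
  moreover have "card (\<Union>v\<in>{..<n}. S \<inter> ({v} \<times> {0..<m})) = (\<Sum>v<n. card (S \<inter> ({v} \<times> {0..<m})))"
    by (rule card_UN_disjoint) (use assms(2) in \<open>auto simp: finite_lessThan\<close>)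
  ultimately show ?thesis by simp
qed

lemma nbr_bound:
  assumes "S \<subseteq> {0..<n} \<times> {0..<m}" "finite S"
  shows "card {y\<in>S. cart_adj Kn_adj Kn_adj (a,b) y}
     \<le> card (S \<inter> ({a} \<times> {0..<m}) - {(a,b)}) + card (S \<inter> ({0..<n} \<times> {b}) - {(a,b)})"
proof -
  have "{y\<in>S. cart_adj Kn_adj Kn_adj (a,b) y} \<subseteq> (S \<inter> ({a} \<times> {0..<m}) - {(a,b)}) \<union> (S \<inter> ({0..<n} \<times> {b}) - {(a,b)})"
    using assms(1) by (auto simp: cart_adj_def Kn_adj_def)
  hence "card {y\<in>S. cart_adj Kn_adj Kn_adj (a,b) y} \<le> card ((S \<inter> ({a} \<times> {0..<m}) - {(a,b)}) \<union> (S \<inter> ({0..<n} \<times> {b}) - {(a,b)}))"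
    by (intro card_mono) (use assms(2) in \<open>auto simp: finite_lessThan\<close>)
  also have "\<dots> \<le> card (S \<inter> ({a} \<times> {0..<m}) - {(a,b)}) + card (S \<inter> ({0..<n} \<times> {b}) - {(a,b)})" by (rule card_Un_le)
  finally show ?thesis .
qed

theorem lemma3:
  fixes n m :: nat and S :: "(nat \<times> nat) set"
  assumes "n \<ge> 2" and "m \<ge> 2"
    and "gamma_2t (cart_verts (Kn_verts n) (Kn_verts m)) (cart_adj Kn_adj Kn_adj) < 2 * min n m"
    and "total_k_dominating 2 (cart_verts (Kn_verts n) (Kn_verts m)) (cart_adj Kn_adj Kn_adj) S"
    and "finite S"
    and "card S = gamma_2t (cart_verts (Kn_verts n) (Kn_verts m)) (cart_adj Kn_adj Kn_adj)"
  shows "(\<forall>v\<in>Kn_verts n. S \<inter> ({v} \<times> Kn_verts m) \<noteq> {})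
       \<and> (\<forall>w\<in>Kn_verts m. S \<inter> (Kn_verts n \<times> {w}) \<noteq> {})
       \<and> (\<exists>v\<in>Kn_verts n. card (S \<inter> ({v} \<times> Kn_verts m)) \<ge> 3)
       \<and> (\<exists>w\<in>Kn_verts m. card (S \<inter> (Kn_verts n \<times> {w})) \<ge> 3)"
proof -
  have sub: "S \<subseteq> {0..<n} \<times> {0..<m}" and dom: "\<And>a b. a < n \<Longrightarrow> b < m \<Longrightarrow> card {y\<in>S. cart_adj Kn_adj Kn_adj (a,b) y} \<ge> 2"
    using assms(4) by (auto simp: total_k_dominating_def cart_verts_def Kn_verts_def)
  have lt: "card S < 2 * n" "card S < 2 * m" using assms(3,6) by auto
  note nb = nbr_bound[OF sub assms(5)]
  have fin: "\<And>A. finite (S \<inter> A)" using assms(5) by auto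
  have colsum: "False" if h: "\<And>w. w < m \<Longrightarrow> card (S \<inter> ({0..<n} \<times> {w})) \<ge> 2"
  proof -
    have "(\<Sum>w<m. (2::nat)) \<le> (\<Sum>w<m. card (S \<inter> ({0..<n} \<times> {w})))"
      by (rule sum_mono) (use h in auto)
    thus False using card_cols[OF sub assms(5)] lt by simp
  qed
  have rowsum: "False" if h: "\<And>v. v < n \<Longrightarrow> card (S \<inter> ({v} \<times> {0..<m})) \<ge> 2"
  proof -
    have "(\<Sum>v<n. (2::nat)) \<le> (\<Sum>v<n. card (S \<inter> ({v} \<times> {0..<m})))"
      by (rule sum_mono) (use h in auto)
    thus False using card_rows[OF sub assms(5)] lt by simp
  qed
  have P1: "S \<inter> ({v} \<times> {0..<m}) \<noteq> {}" if "v < n" for v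
  proof
    assume e: "S \<inter> ({v} \<times> {0..<m}) = {}"
    show False
    proof (rule colsum)
      fix w assume "w < m"
      have "2 \<le> card (S \<inter> ({0..<n} \<times> {w}) - {(v,w)})"
        using dom[OF \<open>v < n\<close> \<open>w < m\<close>] nb[of v w] e by simp
      also have "\<dots> \<le> card (S \<inter> ({0..<n} \<times> {w}))" by (rule card_mono) (auto simp: fin)
      finally show "card (S \<inter> ({0..<n} \<times> {w})) \<ge> 2" .
    qed
  qed
  have P2: "S \<inter> ({0..<n} \<times> {w}) \<noteq> {}" if "w < m" for w
  proof
    assume e: "S \<inter> ({0..<n} \<times> {w}) = {}"
    show False
    proof (rule rowsum)
      fix v assume "v < n"
      have "2 \<le> card (S \<inter> ({v} \<times> {0..<m}) - {(v,w)})"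
        using dom[OF \<open>v < n\<close> \<open>w < m\<close>] nb[of v w] e by simp
      also have "\<dots> \<le> card (S \<inter> ({v} \<times> {0..<m}))" by (rule card_mono) (auto simp: fin)
      finally show "card (S \<inter> ({v} \<times> {0..<m})) \<ge> 2" .
    qed
  qed
  have P3: "\<exists>v<n. card (S \<inter> ({v} \<times> {0..<m})) \<ge> 3"
  proof (rule ccontr)
    assume "\<not> ?thesis"
    hence le: "\<And>v. v < n \<Longrightarrow> card (S \<inter> ({v} \<times> {0..<m})) \<le> 2" by force
    show False
    proof (rule colsum)
      fix w assume w: "w < m"
      then obtain x where x: "x \<in> S \<inter> ({0..<n} \<times> {w})" using P2 by blast
      then obtain v where xv: "x = (v,w)" "v < n" by auto
      have xS: "(v,w) \<in> S" using x xv by simp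
      have "card (S \<inter> ({v} \<times> {0..<m}) - {(v,w)}) = card (S \<inter> ({v} \<times> {0..<m})) - 1"
        using xS w by (simp add: fin)
      hence r1: "card (S \<inter> ({v} \<times> {0..<m}) - {(v,w)}) \<le> 1" using le[OF xv(2)] by simp
      have c1: "card (S \<inter> ({0..<n} \<times> {w}) - {(v,w)}) = card (S \<inter> ({0..<n} \<times> {w})) - 1"
        using xS xv by (simp add: fin)
      show "card (S \<inter> ({0..<n} \<times> {w})) \<ge> 2"
        using dom[OF xv(2) w] nb[of v w] r1 c1 by linarith
    qed
  qed
  have P4: "\<exists>w<m. card (S \<inter> ({0..<n} \<times> {w})) \<ge> 3"
  proof (rule ccontr)
    assume "\<not> ?thesis"
    hence le: "\<And>w. w < m \<Longrightarrow> card (S \<inter> ({0..<n} \<times> {w})) \<le> 2" by force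
    show False
    proof (rule rowsum)
      fix v assume v: "v < n"
      then obtain x where x: "x \<in> S \<inter> ({v} \<times> {0..<m})" using P1 by blast
      then obtain w where xv: "x = (v,w)" "w < m" by auto
      have xS: "(v,w) \<in> S" using x xv by simp
      have "card (S \<inter> ({0..<n} \<times> {w}) - {(v,w)}) = card (S \<inter> ({0..<n} \<times> {w})) - 1"
        using xS v by (simp add: fin)
      hence r1: "card (S \<inter> ({0..<n} \<times> {w}) - {(v,w)}) \<le> 1" using le[OF xv(2)] by simp
      have c1: "card (S \<inter> ({v} \<times> {0..<m}) - {(v,w)}) = card (S \<inter> ({v} \<times> {0..<m})) - 1"
        using xS xv by (simp add: fin)
      show "card (S \<inter> ({v} \<times> {0..<m})) \<ge> 2"
        using dom[OF v xv(2)] nb[of v w] r1 c1 by linarith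
    qed
  qed
  show ?thesis using P1 P2 P3 P4 by (auto simp: Kn_verts_def)
qed

end
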